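(* Let $c=(c_k)_{k\ge1}$ be a sequence of complex numbers. Then $$\|T_c\|\le \sup_{k\ge1}|c_k|+2\sup_{k\ge2}k|c_k-c_{k-1}|,$$ and $$\|T_c\|\ge \sup_{k\ge1}\bigl\{|c_k|^2+(k-1)|c_k-c_{k-1}|^2\bigr\}^{1/2}.$$
   Context: For a complex sequence $c=(c_k)_{k\ge1}$, $T_c$ is the infinite matrix indexed by $j,k\ge1$ with entries $(T_c)_{jk}=c_k$ if $j=k$, $(T_c)_{jk}=c_k-c_{k-1}$ if $j<k$, and $(T_c)_{jk}=0$ if $j>k$. $\|T_c\|$ denotes its operator norm on $\ell^2$ if it acts boundedly, and $\|T_c\|=\infty$ otherwise. *)

theory Defs
  imports "HOL-Analysis.Analysis"
begin

text \<open>Sequences and vectors are indexed by positive naturals; index 0 is ignored.\<close>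

definition l2 :: "(nat \<Rightarrow> complex) set" where
  "l2 = {x. (\<lambda>k. (cmod (x k))\<^sup>2) summable_on {1..}}"

definition l2norm :: "(nat \<Rightarrow> complex) \<Rightarrow> real" where
  "l2norm x = sqrt (\<Sum>\<^sub>\<infinity>k\<in>{1..}. (cmod (x k))\<^sup>2)"

definition Tmat :: "(nat \<Rightarrow> complex) \<Rightarrow> nat \<Rightarrow> nat \<Rightarrow> complex" where
  "Tmat c j k = (if j = k then c k else if j < k then c k - c (k - 1) else 0)"

definition Tapp :: "(nat \<Rightarrow> complex) \<Rightarrow> (nat \<Rightarrow> complex) \<Rightarrow> nat \<Rightarrow> complex" where
  "Tapp c x j = (\<Sum>\<^sub>\<infinity>k\<in>{1..}. Tmat c j k * x k)"

definition acts_boundedly :: "(nat \<Rightarrow> complex) \<Rightarrow> bool" where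
  "acts_boundedly c \<longleftrightarrow> (\<exists>M. \<forall>x\<in>l2.
      (\<forall>j\<ge>1. (\<lambda>k. Tmat c j k * x k) summable_on {1..}) \<and>
      Tapp c x \<in> l2 \<and> l2norm (Tapp c x) \<le> M * l2norm x)"

definition Tnorm :: "(nat \<Rightarrow> complex) \<Rightarrow> ennreal" where
  "Tnorm c = (if acts_boundedly c
      then (SUP x\<in>{x\<in>l2. l2norm x \<le> 1}. ennreal (l2norm (Tapp c x)))
      else top)"

end

theory Submission
  imports Defs
begin

lemma nn_summable_le:
  fixes f :: "'a \<Rightarrow> real"
  assumes "\<And>x. x \<in> S \<Longrightarrow> f x \<ge> 0"
    and "\<And>F. finite F \<Longrightarrow> F \<subseteq> S \<Longrightarrow> sum f F \<le> B"
  shows "f summable_on S \<and> infsum f S \<le> B"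
proof -
  have s: "f summable_on S"
    by (rule nonneg_bdd_above_summable_on) (use assms in \<open>auto intro!: bdd_aboveI2\<close>)
  then show ?thesis using infsum_le_finite_sums[OF s] assms(2) by blast
qed

lemma key1:
  fixes p :: real assumes "p \<ge> 1"
  shows "1 / ((p+1) * sqrt (p+1)) \<le> 2 / sqrt p - 2 / sqrt (p+1)"
proof -
  define a where "a = sqrt p"
  define b where "b = sqrt (p+1)"
  have a0: "a > 0" using assms by (simp add: a_def)
  have ab: "a < b" by (simp add: a_def b_def)
  have bb: "b*b = a*a + 1" using assms by (simp add: a_def b_def)
  have ba: "b - a = 1 / (a+b)"
  proof -
    have "(b - a) * (a + b) = 1" using bb by (simp add: algebra_simps)
    then show ?thesis using a0 ab by (simp add: field_simps)
  qed
  have "2 / a - 2 / b = 2 * (b - a) / (a*b)" using a0 ab by (simp add: field_simps)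
  also have "\<dots> = 2 / (a*b*(a+b))" unfolding ba using a0 ab by (simp add: field_simps)
  finally have "2 / a - 2 / b = 2 / (a*b*(a+b))" .
  moreover have "a*b*(a+b) \<le> 2*(b*b*b)"
  proof -
    have "a*b \<le> b*b" using a0 ab by (intro mult_right_mono) auto
    moreover have "a + b \<le> 2*b" using ab by simp
    ultimately have "a*b*(a+b) \<le> (b*b)*(2*b)" using a0 ab
      by (intro mult_mono) auto
    then show ?thesis by (simp add: algebra_simps)
  qed
  ultimately have "2/(2*(b*b*b)) \<le> 2 / a - 2 / b"
    using a0 ab by (simp only:) (rule divide_left_mono, auto)
  moreover have "(p+1) * sqrt (p+1) = b*b*b" using assms by (simp add: b_def)
  ultimately show ?thesis using a0 ab
    by (simp add: a_def[symmetric] b_def[symmetric])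
qed

lemma key2:
  fixes p :: real assumes "p \<ge> 0"
  shows "1 / sqrt (p+1) \<le> 2 * sqrt (p+1) - 2 * sqrt p"
proof -
  define a where "a = sqrt p"
  define b where "b = sqrt (p+1)"
  have a0: "a \<ge> 0" using assms by (simp add: a_def)
  have ab: "a < b" by (simp add: a_def b_def)
  have bb: "b*b = a*a + 1" using assms by (simp add: a_def b_def)
  have "2*b - 2*a = 2 / (a+b)" using a0 ab bb by (simp add: field_simps)
  moreover have "1/b \<le> 2/(a+b)" using a0 ab by (simp add: field_simps)
  ultimately show ?thesis by (simp add: a_def[symmetric] b_def[symmetric])
qed

lemma tele1:
  assumes "j \<ge> (1::nat)"
  shows "(\<Sum>k\<in>{j<..j+n}. 1 / (real k * sqrt (real k))) \<le> 2 / sqrt j - 2 / sqrt (j+n)"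
proof (induction n)
  case 0 then show ?case by simp
next
  case (Suc n)
  have "{j<..j+Suc n} = insert (Suc (j+n)) {j<..j+n}" by auto
  then have "(\<Sum>k\<in>{j<..j+Suc n}. 1 / (real k * sqrt (real k)))
     = 1 / (real (j+n+1) * sqrt (real (j+n+1))) + (\<Sum>k\<in>{j<..j+n}. 1 / (real k * sqrt (real k)))"
    by simp
  moreover have "1 / (real (j+n+1) * sqrt (real (j+n+1))) \<le> 2 / sqrt (j+n) - 2 / sqrt (j+n+1)"
  proof -
    have h: "1 / ((real (j+n) + 1) * sqrt (real (j+n) + 1)) \<le> 2 / sqrt (real (j+n)) - 2 / sqrt (real (j+n) + 1)"
      by (rule key1) (use assms in simp)
    show ?thesis using h by (simp add: add_ac)
  qed
  ultimately show ?case using Suc by simp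
qed

lemma tele1':
  assumes "j \<ge> (1::nat)" "finite F" "F \<subseteq> {j<..}"
  shows "(\<Sum>k\<in>F. 1 / (real k * sqrt (real k))) \<le> 2 / sqrt j"
proof -
  obtain n where "F \<subseteq> {j<..j+n}"
  proof
    show "F \<subseteq> {j<..j+Max F}"
    proof
      fix x assume x: "x \<in> F"
      then have "x \<le> Max F" using assms(2) by simp
      then show "x \<in> {j<..j+Max F}" using x assms(3) by auto
    qed
  qed
  then have "(\<Sum>k\<in>F. 1 / (real k * sqrt (real k))) \<le> (\<Sum>k\<in>{j<..j+n}. 1 / (real k * sqrt (real k)))"
    by (intro sum_mono2) auto
  also have "\<dots> \<le> 2 / sqrt j - 2 / sqrt (j+n)" by (rule tele1[OF assms(1)])
  also have "\<dots> \<le> 2 / sqrt j" by simp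
  finally show ?thesis .
qed

lemma tele2: "(\<Sum>j\<in>{1..n}. 1 / sqrt (real j)) \<le> 2 * sqrt n"
proof (induction n)
  case 0 then show ?case by simp
next
  case (Suc n)
  have "(\<Sum>j\<in>{1..Suc n}. 1 / sqrt (real j)) = (\<Sum>j\<in>{1..n}. 1 / sqrt (real j)) + 1 / sqrt (real n + 1)"
    by simp
  also have "\<dots> \<le> 2 * sqrt n + (2 * sqrt (real n + 1) - 2 * sqrt n)"
    using Suc key2[of "real n"] by linarith
  finally show ?case by (simp add: add.commute)
qed

lemma infsum_sum_swap:
  fixes f :: "'b \<Rightarrow> 'a \<Rightarrow> real"
  assumes "finite F" "\<And>j. j \<in> F \<Longrightarrow> f j summable_on A"
  shows "(\<lambda>k. \<Sum>j\<in>F. f j k) summable_on A \<and> infsum (\<lambda>k. \<Sum>j\<in>F. f j k) A = (\<Sum>j\<in>F. infsum (f j) A)"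
  using assms
proof (induction F rule: finite_induct)
  case empty then show ?case by simp
next
  case (insert j F)
  then have s1: "f j summable_on A" and s2: "(\<lambda>k. \<Sum>j\<in>F. f j k) summable_on A"
    and e: "infsum (\<lambda>k. \<Sum>j\<in>F. f j k) A = (\<Sum>j\<in>F. infsum (f j) A)" by auto
  show ?case using insert(1,2) summable_on_add[OF s1 s2] infsum_add[OF s1 s2] e by simp
qed

lemma infsum_single:
  fixes v :: "'a \<Rightarrow> 'b::{comm_monoid_add,t2_space}"
  assumes "j \<in> A"
  shows "infsum (\<lambda>k. if k = j then v k else 0) A = v j"
proof -
  have "infsum (\<lambda>k. if k = j then v k else 0) A = infsum (\<lambda>k. if k = j then v k else 0) {j}"
    by (rule infsum_cong_neutral) (use assms in auto)
  then show ?thesis by simp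
qed

lemma summable_single:
  fixes v :: "'a \<Rightarrow> 'b::{comm_monoid_add,t2_space}"
  shows "(\<lambda>k. if k = j then v k else 0) summable_on A"
  by (rule finite_nonzero_values_imp_summable_on) (rule finite_subset[of _ "{j}"], auto)

lemma Y1:
  fixes a :: "nat \<Rightarrow> real"
  assumes a0: "\<And>k. a k \<ge> 0" and as: "(\<lambda>k. (a k)\<^sup>2) summable_on {1..}" and j: "j \<ge> 1"
  shows "(\<lambda>k. if j < k then a k / k else 0) summable_on {1..} \<and>
     (infsum (\<lambda>k. if j < k then a k / k else 0) {1..})\<^sup>2
       \<le> 2 / sqrt j * infsum (\<lambda>k. if j < k then (a k)\<^sup>2 / sqrt k else 0) {1..}"
proof -
  define G where "G = infsum (\<lambda>k. if j < k then (a k)\<^sup>2 / sqrt k else 0) {1..}"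
  have gs: "(\<lambda>k. if j < k then (a k)\<^sup>2 / sqrt k else 0) summable_on {1..}"
  proof (rule summable_on_comparison_test[OF as])
    fix k :: nat assume k: "k \<in> {1..}"
    then have "sqrt k \<ge> 1" by simp
    then have "(a k)\<^sup>2 / sqrt k \<le> (a k)\<^sup>2"
      by (simp add: divide_le_eq mult_le_cancel_left1)
    then show "(if j < k then (a k)\<^sup>2 / sqrt k else 0) \<le> (a k)\<^sup>2" by simp
    show "0 \<le> (if j < k then (a k)\<^sup>2 / sqrt k else 0)" by simp
  qed
  define u where "u k = (if j < k then sqrt (1 / (real k * sqrt k)) else 0)" for k :: nat
  define v where "v k = (if j < k then sqrt ((a k)\<^sup>2 / sqrt k) else 0)" for k :: nat
  have bound: "(\<Sum>k\<in>F. if j < k then a k / k else 0) \<le> sqrt (2 / sqrt j * G)"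
    if F: "finite F" "F \<subseteq> {1..}" for F
  proof -
    have eq: "(if j < k then a k / k else 0) = \<bar>u k\<bar> * \<bar>v k\<bar>" for k
    proof (cases "j < k")
      case True
      then have kp: "real k > 0" by simp
      have "sqrt (1 / (real k * sqrt k)) * sqrt ((a k)\<^sup>2 / sqrt k)
          = sqrt ((a k)\<^sup>2 / (real k * (sqrt k * sqrt k)))"
        by (simp add: real_sqrt_mult[symmetric] field_simps)
      also have "\<dots> = sqrt ((a k / k)\<^sup>2)" using kp by (simp add: power_divide power2_eq_square)
      also have "\<dots> = a k / k" using a0[of k] kp by simp
      finally show ?thesis using True by (simp add: u_def v_def)
    qed (simp add: u_def v_def)
    have "(\<Sum>k\<in>F. if j < k then a k / k else 0) = (\<Sum>k\<in>F. \<bar>u k\<bar> * \<bar>v k\<bar>)"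
      by (simp add: eq)
    also have "\<dots> \<le> L2_set u F * L2_set v F" by (rule L2_set_mult_ineq)
    also have "\<dots> \<le> sqrt (2 / sqrt j) * sqrt G"
    proof (rule mult_mono)
      have "(\<Sum>k\<in>F. (u k)\<^sup>2) = (\<Sum>k\<in>{k\<in>F. j < k}. 1 / (real k * sqrt k))"
      proof -
        have "(\<Sum>k\<in>F. (u k)\<^sup>2) = (\<Sum>k\<in>F. if j < k then 1 / (real k * sqrt k) else 0)"
          by (intro sum.cong) (auto simp: u_def)
        then show ?thesis using F(1) by (simp add: sum.inter_filter)
      qed
      also have "\<dots> \<le> 2 / sqrt j" by (rule tele1') (use j F in auto)
      finally show "L2_set u F \<le> sqrt (2 / sqrt j)" unfolding L2_set_def by simp
      have "(\<Sum>k\<in>F. (v k)\<^sup>2) = (\<Sum>k\<in>F. if j < k then (a k)\<^sup>2 / sqrt k else 0)"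
        by (intro sum.cong) (auto simp: v_def)
      also have "\<dots> \<le> G" unfolding G_def
        by (rule finite_sum_le_infsum[OF gs F]) auto
      finally show "L2_set v F \<le> sqrt G" unfolding L2_set_def by simp
    qed auto
    also have "\<dots> = sqrt (2 / sqrt j * G)" by (simp only: real_sqrt_mult)
    finally show ?thesis .
  qed
  have r: "(\<lambda>k. if j < k then a k / k else 0) summable_on {1..} \<and>
     infsum (\<lambda>k. if j < k then a k / k else 0) {1..} \<le> sqrt (2 / sqrt j * G)"
    by (rule nn_summable_le) (use a0 bound in auto)
  have G0: "G \<ge> 0" unfolding G_def by (rule infsum_nonneg) auto
  have y0: "infsum (\<lambda>k. if j < k then a k / k else 0) {1..} \<ge> 0"
    by (rule infsum_nonneg) (use a0 in auto)
  have "(infsum (\<lambda>k. if j < k then a k / k else 0) {1..})\<^sup>2 \<le> (sqrt (2 / sqrt j * G))\<^sup>2"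
    using r y0 by (intro power_mono) auto
  also have "\<dots> = 2 / sqrt j * G" using G0 by simp
  finally show ?thesis using r G_def by simp
qed

lemma Y2:
  fixes a :: "nat \<Rightarrow> real"
  assumes a0: "\<And>k. a k \<ge> 0" and as: "(\<lambda>k. (a k)\<^sup>2) summable_on {1..}"
    and F: "finite F" "F \<subseteq> {1..}"
  shows "(\<Sum>j\<in>F. (infsum (\<lambda>k. if j < k then a k / k else 0) {1..})\<^sup>2)
     \<le> 4 * infsum (\<lambda>k. (a k)\<^sup>2) {1..}"
proof -
  define g where "g k = (a k)\<^sup>2 / sqrt k" for k :: nat
  have gs: "(\<lambda>k. if j < k then g k else 0) summable_on {1..}" for j :: nat
  proof (rule summable_on_comparison_test[OF as])
    fix k :: nat assume k: "k \<in> {1..}"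
    then have "sqrt k \<ge> 1" by simp
    then have "(a k)\<^sup>2 / sqrt k \<le> (a k)\<^sup>2"
      by (simp add: divide_le_eq mult_le_cancel_left1)
    then show "(if j < k then g k else 0) \<le> (a k)\<^sup>2" by (simp add: g_def)
    show "0 \<le> (if j < k then g k else 0)" by (simp add: g_def)
  qed
  have gs2: "(\<lambda>k. 2 / sqrt j * (if j < k then g k else 0)) summable_on {1..}" for j :: nat
    by (rule summable_on_cmult_right[OF gs])
  have "(\<Sum>j\<in>F. (infsum (\<lambda>k. if j < k then a k / k else 0) {1..})\<^sup>2)
      \<le> (\<Sum>j\<in>F. 2 / sqrt j * infsum (\<lambda>k. if j < k then g k else 0) {1..})"
  proof (rule sum_mono)
    fix j assume "j \<in> F"
    then have "j \<ge> 1" using F by auto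
    from Y1[OF a0 as this] show "(infsum (\<lambda>k. if j < k then a k / k else 0) {1..})\<^sup>2
      \<le> 2 / sqrt j * infsum (\<lambda>k. if j < k then g k else 0) {1..}" unfolding g_def by simp
  qed
  also have "\<dots> = (\<Sum>j\<in>F. infsum (\<lambda>k. 2 / sqrt j * (if j < k then g k else 0)) {1..})"
    by (intro sum.cong refl infsum_cmult_right[symmetric] gs)
  also have "\<dots> = infsum (\<lambda>k. \<Sum>j\<in>F. 2 / sqrt j * (if j < k then g k else 0)) {1..}"
    using infsum_sum_swap[OF F(1), of "\<lambda>j k. 2 / sqrt j * (if j < k then g k else 0)" "{1..}"] gs2
    by simp
  also have "\<dots> \<le> infsum (\<lambda>k. 4 * (a k)\<^sup>2) {1..}"
  proof (rule infsum_mono)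
    show "(\<lambda>k. \<Sum>j\<in>F. 2 / sqrt j * (if j < k then g k else 0)) summable_on {1..}"
      using infsum_sum_swap[OF F(1), of "\<lambda>j k. 2 / sqrt j * (if j < k then g k else 0)" "{1..}"] gs2
      by simp
    show "(\<lambda>k. 4 * (a k)\<^sup>2) summable_on {1..}" by (rule summable_on_cmult_right[OF as])
    fix k :: nat assume k: "k \<in> {1..}"
    then have kp: "sqrt k > 0" by simp
    have e1: "(\<Sum>j\<in>F. 2 / sqrt j * (if j < k then g k else 0))
        = 2 * g k * (\<Sum>j\<in>F. if j < k then 1 / sqrt j else 0)"
      by (simp add: sum_distrib_left if_distrib cong: if_cong)
    have "(\<Sum>j\<in>F. if j < k then 1 / sqrt j else 0) = (\<Sum>j\<in>{j\<in>F. j < k}. 1 / sqrt j)"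
      using F(1) by (simp add: sum.inter_filter)
    also have "\<dots> \<le> (\<Sum>j\<in>{1..k-1}. 1 / sqrt j)"
      by (rule sum_mono2) (use F in auto)
    also have "\<dots> \<le> 2 * sqrt (real (k-1))" by (rule tele2)
    also have "\<dots> \<le> 2 * sqrt k" by simp
    finally have e2: "(\<Sum>j\<in>F. if j < k then 1 / sqrt j else 0) \<le> 2 * sqrt k" .
    have "(\<Sum>j\<in>F. 2 / sqrt j * (if j < k then g k else 0)) \<le> 2 * g k * (2 * sqrt k)"
      unfolding e1 by (rule mult_left_mono[OF e2]) (simp add: g_def)
    also have "\<dots> = 4 * (a k)\<^sup>2" using kp by (simp add: g_def)
    finally show "(\<Sum>j\<in>F. 2 / sqrt j * (if j < k then g k else 0)) \<le> 4 * (a k)\<^sup>2" .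
  qed
  also have "\<dots> = 4 * infsum (\<lambda>k. (a k)\<^sup>2) {1..}" by (rule infsum_cmult_right[OF as])
  finally show ?thesis .
qed

lemma upper:
  fixes c x :: "nat \<Rightarrow> complex"
  assumes A: "\<And>k. k \<ge> 1 \<Longrightarrow> cmod (c k) \<le> A"
    and B: "\<And>k. k \<ge> 2 \<Longrightarrow> real k * cmod (c k - c (k-1)) \<le> B"
    and x: "x \<in> l2"
  shows "(\<forall>j\<ge>1. (\<lambda>k. Tmat c j k * x k) summable_on {1..}) \<and> Tapp c x \<in> l2
     \<and> l2norm (Tapp c x) \<le> (A + 2*B) * l2norm x"
proof -
  define a where "a k = cmod (x k)" for k
  have a0: "\<And>k. a k \<ge> 0" by (simp add: a_def)
  have as: "(\<lambda>k. (a k)\<^sup>2) summable_on {1..}" using x by (simp add: l2_def a_def)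
  define S where "S = infsum (\<lambda>k. (a k)\<^sup>2) {1..}"
  have S0: "S \<ge> 0" unfolding S_def by (rule infsum_nonneg) auto
  define y where "y j = infsum (\<lambda>k. if j < k then a k / k else 0) {1..}" for j :: nat
  have y0: "y j \<ge> 0" for j unfolding y_def by (rule infsum_nonneg) (use a0 in auto)
  have A0: "A \<ge> 0" using A[of 1] by (meson norm_ge_zero order_trans order_refl)
  have B0: "B \<ge> 0" using B[of 2] by (smt (verit) norm_ge_zero of_nat_0_le_iff mult_nonneg_nonneg order_refl)
  have row: "(\<lambda>k. Tmat c j k * x k) summable_on {1..} \<and> cmod (Tapp c x j) \<le> A * a j + B * y j"
    if j: "j \<ge> 1" for j
  proof -
    define h where "h k = (if k = j then A * a k else 0) + B * (if j < k then a k / k else 0)" for k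
    have ys: "(\<lambda>k. if j < k then a k / k else 0) summable_on {1..}" using Y1[OF a0 as j] by blast
    have hs: "h summable_on {1..}" unfolding h_def
      by (intro summable_on_add summable_single summable_on_cmult_right ys)
    have hb: "norm (Tmat c j k * x k) \<le> h k" if k: "k \<in> {1..}" for k
    proof (cases "k = j")
      case True
      then show ?thesis using A[of j] j a0[of j]
        by (simp add: h_def Tmat_def norm_mult a_def mult_right_mono)
    next
      case False
      show ?thesis
      proof (cases "j < k")
        case True
        then have k2: "k \<ge> 2" using j by simp
        have kp: "real k > 0" using k2 by simp
        have "cmod (c k - c (k-1)) \<le> B / k" using B[OF k2] kp by (simp add: field_simps)
        then have "cmod (c k - c (k-1)) * a k \<le> B / k * a k" using a0[of k] by (rule mult_right_mono)
        then show ?thesis using True False by (simp add: h_def Tmat_def norm_mult a_def)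
      next
        case False2: False
        then show ?thesis using False A0 B0 a0[of k] by (simp add: h_def Tmat_def)
      qed
    qed
    have ns: "(\<lambda>k. norm (Tmat c j k * x k)) summable_on {1..}"
      by (rule summable_on_comparison_test[OF hs hb]) auto
    have rs: "(\<lambda>k. Tmat c j k * x k) summable_on {1..}"
      by (rule abs_summable_summable[OF ns])
    have "cmod (Tapp c x j) \<le> infsum (\<lambda>k. norm (Tmat c j k * x k)) {1..}"
      unfolding Tapp_def by (rule norm_infsum_bound[OF ns])
    also have "\<dots> \<le> infsum h {1..}" by (rule infsum_mono[OF ns hs hb])
    also have "\<dots> = infsum (\<lambda>k. if k = j then A * a k else 0) {1..}
        + infsum (\<lambda>k. B * (if j < k then a k / k else 0)) {1..}"
      unfolding h_def by (rule infsum_add[OF summable_single summable_on_cmult_right[OF ys]])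
    also have "infsum (\<lambda>k. if k = j then A * a k else 0) {1..} = A * a j"
      by (rule infsum_single) (use j in simp)
    also have "infsum (\<lambda>k. B * (if j < k then a k / k else 0)) {1..} = B * y j"
      unfolding y_def by (rule infsum_cmult_right[OF ys])
    finally show ?thesis using rs by blast
  qed
  have fb: "(\<Sum>j\<in>F. (cmod (Tapp c x j))\<^sup>2) \<le> ((A + 2*B) * sqrt S)\<^sup>2"
    if F: "finite F" "F \<subseteq> {1..}" for F
  proof -
    have "(\<Sum>j\<in>F. (cmod (Tapp c x j))\<^sup>2) \<le> (\<Sum>j\<in>F. (A * a j + B * y j)\<^sup>2)"
      using F row by (intro sum_mono power_mono) auto
    also have "\<dots> = (L2_set (\<lambda>j. A * a j + B * y j) F)\<^sup>2"
      unfolding L2_set_def by (simp add: sum_nonneg)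
    also have "\<dots> \<le> (L2_set (\<lambda>j. A * a j) F + L2_set (\<lambda>j. B * y j) F)\<^sup>2"
      by (intro power_mono L2_set_triangle_ineq) auto
    also have "\<dots> \<le> (A * sqrt S + B * (2 * sqrt S))\<^sup>2"
    proof (intro power_mono add_mono)
      have "(\<Sum>j\<in>F. (a j)\<^sup>2) \<le> S" unfolding S_def
        by (rule finite_sum_le_infsum[OF as F]) auto
      then have "L2_set a F \<le> sqrt S" unfolding L2_set_def by simp
      then show "L2_set (\<lambda>j. A * a j) F \<le> A * sqrt S"
        using A0 by (simp add: L2_set_right_distrib[symmetric] mult_left_mono)
      have "(\<Sum>j\<in>F. (y j)\<^sup>2) \<le> 4 * S" unfolding S_def y_def by (rule Y2[OF a0 as F])
      then have "L2_set y F \<le> sqrt (4 * S)" unfolding L2_set_def by simp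
      also have "sqrt (4 * S) = 2 * sqrt S" by (simp add: real_sqrt_mult)
      finally show "L2_set (\<lambda>j. B * y j) F \<le> B * (2 * sqrt S)"
        using B0 by (simp add: L2_set_right_distrib[symmetric] mult_left_mono)
    qed (auto intro: add_nonneg_nonneg)
    also have "\<dots> = ((A + 2*B) * sqrt S)\<^sup>2" by (simp add: algebra_simps)
    finally show ?thesis .
  qed
  have r: "(\<lambda>j. (cmod (Tapp c x j))\<^sup>2) summable_on {1..} \<and>
       infsum (\<lambda>j. (cmod (Tapp c x j))\<^sup>2) {1..} \<le> ((A + 2*B) * sqrt S)\<^sup>2"
    by (rule nn_summable_le) (use fb in auto)
  then have "Tapp c x \<in> l2" by (simp add: l2_def)
  moreover have "l2norm (Tapp c x) \<le> (A + 2*B) * l2norm x"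
  proof -
    have "l2norm (Tapp c x) \<le> sqrt (((A + 2*B) * sqrt S)\<^sup>2)"
      unfolding l2norm_def using r real_sqrt_le_mono by blast
    also have "\<dots> = (A + 2*B) * sqrt S" using A0 B0 S0 by simp
    finally show ?thesis by (simp add: l2norm_def S_def a_def)
  qed
  ultimately show ?thesis using row by blast
qed

lemma lower:
  fixes c :: "nat \<Rightarrow> complex"
  assumes k: "k \<ge> 1"
  shows "ennreal (sqrt ((cmod (c k))\<^sup>2 + real (k - 1) * (cmod (c k - c (k - 1)))\<^sup>2)) \<le> Tnorm c"
proof (cases "acts_boundedly c")
  case False then show ?thesis by (simp add: Tnorm_def)
next
  case True
  define e where "e i = (if i = k then (1::complex) else 0)" for i :: nat
  have e2: "(\<lambda>i. (cmod (e i))\<^sup>2) = (\<lambda>i. if i = k then (1::real) else 0)"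
    by (auto simp: e_def fun_eq_iff)
  have el2: "e \<in> l2" unfolding l2_def mem_Collect_eq e2 by (rule summable_single)
  have en: "l2norm e = 1" unfolding l2norm_def e2
    using infsum_single[of k "{1..}" "\<lambda>_. 1::real"] k by simp
  have Te: "Tapp c e j = Tmat c j k" for j
  proof -
    have "(\<lambda>i. Tmat c j i * e i) = (\<lambda>i. if i = k then Tmat c j i else 0)"
      by (auto simp: e_def fun_eq_iff)
    then show ?thesis unfolding Tapp_def using infsum_single[of k "{1..}" "\<lambda>i. Tmat c j i"] k by simp
  qed
  have "infsum (\<lambda>j. (cmod (Tmat c j k))\<^sup>2) {1..} = (\<Sum>j\<in>{1..k}. (cmod (Tmat c j k))\<^sup>2)"
  proof -
    have "infsum (\<lambda>j. (cmod (Tmat c j k))\<^sup>2) {1..} = infsum (\<lambda>j. (cmod (Tmat c j k))\<^sup>2) {1..k}"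
      by (rule infsum_cong_neutral) (auto simp: Tmat_def)
    then show ?thesis by simp
  qed
  also have "{1..k} = insert k {1..<k}" using k by auto
  also have "(\<Sum>j\<in>insert k {1..<k}. (cmod (Tmat c j k))\<^sup>2)
      = (cmod (c k))\<^sup>2 + (\<Sum>j\<in>{1..<k}. (cmod (c k - c (k - 1)))\<^sup>2)"
    by (simp add: Tmat_def)
  also have "(\<Sum>j\<in>{1..<k}. (cmod (c k - c (k - 1)))\<^sup>2) = real (k - 1) * (cmod (c k - c (k - 1)))\<^sup>2"
    by simp
  finally have "l2norm (Tapp c e) = sqrt ((cmod (c k))\<^sup>2 + real (k - 1) * (cmod (c k - c (k - 1)))\<^sup>2)"
    unfolding l2norm_def Te by simp
  moreover have "ennreal (l2norm (Tapp c e)) \<le> (SUP x\<in>{x\<in>l2. l2norm x \<le> 1}. ennreal (l2norm (Tapp c x)))"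
    by (rule SUP_upper) (use el2 en in auto)
  ultimately show ?thesis using True by (simp add: Tnorm_def)
qed

theorem theorem2:
  fixes c :: "nat \<Rightarrow> complex"
  shows "Tnorm c \<le> (SUP k\<in>{1..}. ennreal (cmod (c k)))
            + 2 * (SUP k\<in>{2..}. ennreal (real k * cmod (c k - c (k - 1)))) \<and>
         Tnorm c \<ge> (SUP k\<in>{1..}. ennreal (sqrt ((cmod (c k))\<^sup>2
            + real (k - 1) * (cmod (c k - c (k - 1)))\<^sup>2)))"
proof
  define R1 where "R1 = (SUP k\<in>{1..}. ennreal (cmod (c k)))"
  define R2 where "R2 = (SUP k\<in>{2..}. ennreal (real k * cmod (c k - c (k - 1))))"
  show "Tnorm c \<le> R1 + 2 * R2"
  proof (cases "R1 = top \<or> R2 = top")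
    case True
    then have "R1 + 2 * R2 = top"
    proof
      assume "R1 = top" then show ?thesis by simp
    next
      assume "R2 = top" then show ?thesis by (simp add: ennreal_mult_top)
    qed
    then show ?thesis by (metis top_greatest)
  next
    case False
    define A where "A = enn2real R1"
    define B where "B = enn2real R2"
    have R1A: "R1 = ennreal A" using False by (simp add: A_def top.not_eq_extremum)
    have R2B: "R2 = ennreal B" using False by (simp add: B_def top.not_eq_extremum)
    have A0: "A \<ge> 0" and B0: "B \<ge> 0" by (simp_all add: A_def B_def)
    have hA: "cmod (c k) \<le> A" if "k \<ge> 1" for k
    proof -
      have "ennreal (cmod (c k)) \<le> R1" unfolding R1_def by (rule SUP_upper) (use that in auto)
      then show ?thesis using A0 by (simp add: R1A)
    qed
    have hB: "real k * cmod (c k - c (k-1)) \<le> B" if "k \<ge> 2" for k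
    proof -
      have "ennreal (real k * cmod (c k - c (k-1))) \<le> R2" unfolding R2_def by (rule SUP_upper) (use that in auto)
      then show ?thesis using B0 by (simp add: R2B)
    qed
    have up: "(\<forall>j\<ge>1. (\<lambda>k. Tmat c j k * x k) summable_on {1..}) \<and> Tapp c x \<in> l2
        \<and> l2norm (Tapp c x) \<le> (A + 2*B) * l2norm x" if "x \<in> l2" for x
      by (rule upper[OF hA hB that])
    have ab: "acts_boundedly c" unfolding acts_boundedly_def using up by blast
    have "Tnorm c \<le> ennreal (A + 2*B)"
      unfolding Tnorm_def using ab
    proof (simp only: if_True, intro SUP_least)
      fix x assume "x \<in> {x \<in> l2. l2norm x \<le> 1}"
      then have x: "x \<in> l2" "l2norm x \<le> 1" by auto
      have "l2norm (Tapp c x) \<le> (A + 2*B) * l2norm x" using up[OF x(1)] by blast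
      also have "\<dots> \<le> (A + 2*B) * 1" using x(2) A0 B0 by (intro mult_left_mono) auto
      finally show "ennreal (l2norm (Tapp c x)) \<le> ennreal (A + 2*B)" by (intro ennreal_leI) simp
    qed
    also have "ennreal (A + 2*B) = R1 + 2 * R2"
      using A0 B0 by (simp add: R1A R2B ennreal_mult)
    finally show ?thesis .
  qed
next
  show "(SUP k\<in>{1..}. ennreal (sqrt ((cmod (c k))\<^sup>2
            + real (k - 1) * (cmod (c k - c (k - 1)))\<^sup>2))) \<le> Tnorm c"
    by (rule SUP_least) (rule lower, simp)
qed

end
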